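(* Let $R:\mathcal X\times\mathcal X\to\mathcal X\times\mathcal X$ be a pentagon map. Then for every $n>1$, $i,l\in\{1,\dots,n\}$ and $k\in\{1,\dots,n-l+1\}$, the map ${}^{(n)}T^{i,k,l}:\mathcal X^n\times\mathcal X^n\to\mathcal X^n\times\mathcal X^n$ is a pentagon map, i.e. $$T_{23}\circ T_{12}=T_{12}\circ T_{13}\circ T_{23}$$ as maps on $\mathcal X^{3n}$.
   Context: Pentagon map: for a set $Y$ and $S:Y\times Y\to Y\times Y$, with $S_{12}=S\times\mathrm{id}_Y$, $S_{23}=\mathrm{id}_Y\times S$, $S_{13}(y_1,y_2,y_3)=(p,y_2,q)$ where $(p,q)=S(y_1,y_3)$, one requires $S_{12}\circ S_{13}\circ S_{23}=S_{23}\circ S_{12}$ (rightmost applied first). For an integer $m$ and $b\in\{1,2,3\}$ let $[m]_b$ be the unique element of $\{(b-1)n+1,\dots,bn\}$ congruent to $m$ mod $n$. For positions $p\neq q$ of $\mathcal X^N$, $R_{p,q}$ acts as $R$ on components $(p,q)$ and identically elsewhere; $\circ_{j=1}^k f^j:=f^1\circ\cdots\circ f^k$. On $\mathcal X^{2n}$: ${}^{(n)}t^{i,k,m}=\circ_{j=1}^{k}R_{[i+k+m-1]_1,[i+n+j-1]_2}$ and ${}^{(n)}T^{i,k,l}={}^{(n)}t^{i,k,0}\circ\cdots\circ{}^{(n)}t^{i,k,l-1}$. On $\mathcal X^{3n}$: $t^{m}_{12}=\circ_{j=1}^{k}R_{[i+k+m-1]_1,[i+n+j-1]_2}$, $t^{m}_{13}=\circ_{j=1}^{k}R_{[i+k+m-1]_1,[i+2n+j-1]_3}$,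 $t^{m}_{23}=\circ_{j=1}^{k}R_{[i+n+k+m-1]_2,[i+2n+j-1]_3}$, and $T_{st}=t^{0}_{st}\circ\cdots\circ t^{l-1}_{st}$; these coincide with $({}^{(n)}T^{i,k,l})_{12},({}^{(n)}T^{i,k,l})_{13},({}^{(n)}T^{i,k,l})_{23}$ in the sense of the pentagon-map definition with $Y=\mathcal X^n$. *)

theory Defs
  imports Main
begin

definition S12 :: "('b \<times> 'b \<Rightarrow> 'b \<times> 'b) \<Rightarrow> 'b \<times> 'b \<times> 'b \<Rightarrow> 'b \<times> 'b \<times> 'b" where
  "S12 S y = (case y of (y1, y2, y3) \<Rightarrow> (case S (y1, y2) of (p, q) \<Rightarrow> (p, q, y3)))"

definition S23 :: "('b \<times> 'b \<Rightarrow> 'b \<times> 'b) \<Rightarrow> 'b \<times> 'b \<times> 'b \<Rightarrow> 'b \<times> 'b \<times> 'b" where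
  "S23 S y = (case y of (y1, y2, y3) \<Rightarrow> (case S (y2, y3) of (p, q) \<Rightarrow> (y1, p, q)))"

definition S13 :: "('b \<times> 'b \<Rightarrow> 'b \<times> 'b) \<Rightarrow> 'b \<times> 'b \<times> 'b \<Rightarrow> 'b \<times> 'b \<times> 'b" where
  "S13 S y = (case y of (y1, y2, y3) \<Rightarrow> (case S (y1, y3) of (p, q) \<Rightarrow> (p, y2, q)))"

definition pentagon_map :: "('b \<times> 'b \<Rightarrow> 'b \<times> 'b) \<Rightarrow> bool" where
  "pentagon_map S \<longleftrightarrow> S12 S \<circ> S13 S \<circ> S23 S = S23 S \<circ> S12 S"

text \<open>Elements of X^N are modelled as functions nat => 'a, position p (1 <= p <= N)
  being the p-th component; other values are never touched.\<close>

text \<open>[m]_b: the unique element of {(b-1)n+1,...,bn} congruent to m mod n.\<close>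
definition brk :: "nat \<Rightarrow> nat \<Rightarrow> int \<Rightarrow> nat" where
  "brk n b m = nat ((int b - 1) * int n + (m - 1) mod int n + 1)"

definition Rpq :: "('a \<times> 'a \<Rightarrow> 'a \<times> 'a) \<Rightarrow> nat \<Rightarrow> nat \<Rightarrow> (nat \<Rightarrow> 'a) \<Rightarrow> (nat \<Rightarrow> 'a)" where
  "Rpq R p q x = (case R (x p, x q) of (a, b) \<Rightarrow> x(p := a, q := b))"

definition comp_seq :: "(nat \<Rightarrow> 'c \<Rightarrow> 'c) \<Rightarrow> nat \<Rightarrow> nat \<Rightarrow> 'c \<Rightarrow> 'c" where
  "comp_seq f a b = foldr (\<circ>) (map f [a..<b+1]) id"
  (* composition f a o f (a+1) o ... o f b *)

text \<open>t^m_{st} on X^{3n}, with s,t in {1,2,3}: block s gives the shift (s-1)n in the first index.\<close>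
definition tt :: "('a \<times> 'a \<Rightarrow> 'a \<times> 'a) \<Rightarrow> nat \<Rightarrow> nat \<Rightarrow> nat \<Rightarrow> nat \<Rightarrow> nat \<Rightarrow> nat \<Rightarrow>
    (nat \<Rightarrow> 'a) \<Rightarrow> (nat \<Rightarrow> 'a)" where
  "tt R n i k s t m = comp_seq (\<lambda>j. Rpq R
      (brk n s (int i + int (s - 1) * int n + int k + int m - 1))
      (brk n t (int i + int (t - 1) * int n + int j - 1))) 1 k"

definition TT :: "('a \<times> 'a \<Rightarrow> 'a \<times> 'a) \<Rightarrow> nat \<Rightarrow> nat \<Rightarrow> nat \<Rightarrow> nat \<Rightarrow> nat \<Rightarrow> nat \<Rightarrow>
    (nat \<Rightarrow> 'a) \<Rightarrow> (nat \<Rightarrow> 'a)" where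
  "TT R n i k l s t = comp_seq (tt R n i k s t) 0 (l - 1)"

end

theory Submission imports Defs begin

abbreviation "ff R \<equiv> Rpq R"

definition MM :: "('a \<times> 'a \<Rightarrow> 'a \<times> 'a) \<Rightarrow> nat list \<Rightarrow> nat list \<Rightarrow> (nat \<Rightarrow> 'a) \<Rightarrow> (nat \<Rightarrow> 'a)" where
  "MM R P Q = foldr (\<circ>) (concat (map (\<lambda>p. map (\<lambda>q. Rpq R p q) Q) P)) id"

lemma Rpq_comm:
  assumes "{p,q} \<inter> {p',q'} = {}"
  shows "Rpq R p q \<circ> Rpq R p' q' = Rpq R p' q' \<circ> Rpq R p q"
  using assms by (auto simp: fun_eq_iff Rpq_def split: prod.splits)

lemma comm_foldr1:
  assumes "\<forall>g\<in>set gs. F \<circ> g = g \<circ> F"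
  shows "F \<circ> foldr (\<circ>) gs id = foldr (\<circ>) gs id \<circ> F"
  using assms
proof (induction gs)
  case Nil then show ?case by simp
next
  case (Cons g gs)
  have a: "F \<circ> g = g \<circ> F" using Cons.prems by (meson list.set_intros(1))
  have b: "F \<circ> foldr (\<circ>) gs id = foldr (\<circ>) gs id \<circ> F" using Cons.prems by (intro Cons.IH) auto
  have "F \<circ> foldr (\<circ>) (g#gs) id = (F \<circ> g) \<circ> foldr (\<circ>) gs id" by (simp add: comp_assoc)
  also have "\<dots> = g \<circ> (F \<circ> foldr (\<circ>) gs id)" by (subst a) (rule comp_assoc)
  also have "\<dots> = foldr (\<circ>) (g#gs) id \<circ> F" by (simp add: b comp_assoc)
  finally show ?case .
qed

lemma comm_foldr2:
  assumes "\<forall>g\<in>set gs. \<forall>h\<in>set hs. h \<circ> g = g \<circ> h"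
  shows "foldr (\<circ>) hs id \<circ> foldr (\<circ>) gs id = foldr (\<circ>) gs id \<circ> foldr (\<circ>) hs id"
proof -
  have "\<forall>g\<in>set gs. foldr (\<circ>) hs id \<circ> g = g \<circ> foldr (\<circ>) hs id"
    using assms comm_foldr1[of hs] by metis
  then show ?thesis by (rule comm_foldr1)
qed

lemma MM_comm:
  assumes "(set P \<union> set Q) \<inter> (set P' \<union> set Q') = {}"
  shows "MM R P Q \<circ> MM R P' Q' = MM R P' Q' \<circ> MM R P Q"
  unfolding MM_def
  by (rule comm_foldr2) (use assms in \<open>auto intro!: Rpq_comm\<close>)

lemma comm_assoc: "A \<circ> B = B \<circ> A \<Longrightarrow> A \<circ> (B \<circ> Y) = B \<circ> (A \<circ> Y)"
  by (metis comp_assoc)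

lemma foldr_comp_g: "foldr (\<circ>) xs g = foldr (\<circ>) xs id \<circ> g"
  by (induction xs) (auto simp: comp_assoc)

lemma foldr_comp_f: "foldr (\<circ>) xs (foldr (\<circ>) ys id) = foldr (\<circ>) xs id \<circ> foldr (\<circ>) ys id"
  by (rule foldr_comp_g)

lemma MM_Cons: "MM R (p#P) Q = MM R [p] Q \<circ> MM R P Q"
  by (simp add: MM_def foldr_append foldr_comp_f)
lemma MM_append1: "MM R (P1@P2) Q = MM R P1 Q \<circ> MM R P2 Q"
  by (simp add: MM_def foldr_append foldr_comp_f)
lemma MM_Nil1[simp]: "MM R [] Q = id" by (simp add: MM_def)
lemma MM_Nil2[simp]: "MM R P [] = id" by (induction P) (simp_all add: MM_def)
lemma MM_single: "MM R [p] [q] = Rpq R p q" by (simp add: MM_def)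
lemma MM_row_Cons: "MM R [p] (q#Q) = Rpq R p q \<circ> MM R [p] Q" by (simp add: MM_def)
lemma MM_row_append: "MM R [p] (Q1@Q2) = MM R [p] Q1 \<circ> MM R [p] Q2" by (simp add: MM_def foldr_append foldr_comp_f)

lemma MM_append2:
  assumes "distinct P" "set Q1 \<inter> set Q2 = {}" "set P \<inter> (set Q1 \<union> set Q2) = {}"
  shows "MM R P (Q1@Q2) = MM R P Q1 \<circ> MM R P Q2"
  using assms
proof (induction P)
  case Nil then show ?case by simp
next
  case (Cons p P)
  have IH: "MM R P (Q1@Q2) = MM R P Q1 \<circ> MM R P Q2" using Cons by auto
  have c: "MM R [p] Q2 \<circ> MM R P Q1 = MM R P Q1 \<circ> MM R [p] Q2"
    by (rule MM_comm) (use Cons.prems in auto)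
  have "MM R (p#P) (Q1@Q2) = MM R [p] Q1 \<circ> (MM R [p] Q2 \<circ> (MM R P Q1 \<circ> MM R P Q2))"
    by (simp add: MM_Cons[of R p P] MM_row_append IH comp_assoc)
  also have "\<dots> = MM R [p] Q1 \<circ> (MM R P Q1 \<circ> (MM R [p] Q2 \<circ> MM R P Q2))"
    by (simp add: comm_assoc[OF c])
  also have "\<dots> = MM R (p#P) Q1 \<circ> MM R (p#P) Q2"
    by (simp add: MM_Cons[of R p P] comp_assoc)
  finally show ?case .
qed

lemma pent_pt:
  assumes "pentagon_map R" "x \<noteq> y" "y \<noteq> z" "x \<noteq> z"
  shows "Rpq R y z \<circ> Rpq R x y = Rpq R x y \<circ> Rpq R x z \<circ> Rpq R y z"
proof
  fix s
  have e: "(S12 R \<circ> S13 R \<circ> S23 R) (s x, s y, s z) = (S23 R \<circ> S12 R) (s x, s y, s z)"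
    using assms(1) unfolding pentagon_map_def by simp
  show "(Rpq R y z \<circ> Rpq R x y) s = (Rpq R x y \<circ> Rpq R x z \<circ> Rpq R y z) s"
    using e assms(2-4)
    by (auto simp: Rpq_def S12_def S13_def S23_def fun_eq_iff split: prod.splits)
qed

lemma L2:
  assumes "pentagon_map R" "u \<noteq> c" "u \<notin> set Z" "c \<notin> set Z" "distinct Z"
  shows "MM R [c] Z \<circ> Rpq R u c = Rpq R u c \<circ> (MM R [u] Z \<circ> MM R [c] Z)"
  using assms(3-5)
proof (induction Z)
  case Nil then show ?case by simp
next
  case (Cons z Z)
  have IH: "MM R [c] Z \<circ> Rpq R u c = Rpq R u c \<circ> (MM R [u] Z \<circ> MM R [c] Z)"
    by (rule Cons.IH) (use Cons.prems in auto)
  have P: "Rpq R c z \<circ> Rpq R u c = Rpq R u c \<circ> (Rpq R u z \<circ> Rpq R c z)"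
    using pent_pt[OF assms(1), of u c z] Cons.prems assms(2) by (simp add: comp_assoc)
  have C: "Rpq R c z \<circ> MM R [u] Z = MM R [u] Z \<circ> Rpq R c z"
    using MM_comm[of "[c]" "[z]" "[u]" Z R] Cons.prems assms(2) by (auto simp: MM_single)
  have "MM R [c] (z#Z) \<circ> Rpq R u c = Rpq R c z \<circ> (MM R [c] Z \<circ> Rpq R u c)"
    by (simp add: MM_row_Cons comp_assoc)
  also have "\<dots> = Rpq R c z \<circ> (Rpq R u c \<circ> (MM R [u] Z \<circ> MM R [c] Z))" by (simp add: IH)
  also have "\<dots> = Rpq R u c \<circ> (Rpq R u z \<circ> (Rpq R c z \<circ> (MM R [u] Z \<circ> MM R [c] Z)))"
    by (simp add: P flip: comp_assoc)
  also have "\<dots> = Rpq R u c \<circ> (Rpq R u z \<circ> (MM R [u] Z \<circ> (Rpq R c z \<circ> MM R [c] Z)))"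
    by (simp add: comm_assoc[OF C])
  also have "\<dots> = Rpq R u c \<circ> (MM R [u] (z#Z) \<circ> MM R [c] (z#Z))"
    by (simp add: MM_row_Cons comp_assoc)
  finally show ?case .
qed

lemma K:
  assumes "pentagon_map R" "distinct U" "distinct Z" "c \<notin> set U" "c \<notin> set Z" "set U \<inter> set Z = {}"
  shows "MM R [c] Z \<circ> MM R U [c] = MM R U [c] \<circ> (MM R U Z \<circ> MM R [c] Z)"
  using assms(2,4,6)
proof (induction U)
  case Nil then show ?case by simp
next
  case (Cons u U)
  have IH: "MM R [c] Z \<circ> MM R U [c] = MM R U [c] \<circ> (MM R U Z \<circ> MM R [c] Z)"
    by (rule Cons.IH) (use Cons.prems in auto)
  have L: "MM R [c] Z \<circ> Rpq R u c = Rpq R u c \<circ> (MM R [u] Z \<circ> MM R [c] Z)"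
    using L2[OF assms(1), of u c Z] Cons.prems assms(3,5) by auto
  have C: "MM R [u] Z \<circ> MM R U [c] = MM R U [c] \<circ> MM R [u] Z"
    by (rule MM_comm) (use Cons.prems assms(5) in auto)
  have "MM R [c] Z \<circ> MM R (u#U) [c] = (MM R [c] Z \<circ> Rpq R u c) \<circ> MM R U [c]"
    by (simp add: MM_Cons[of R u U] MM_single comp_assoc)
  also have "\<dots> = Rpq R u c \<circ> (MM R [u] Z \<circ> (MM R [c] Z \<circ> MM R U [c]))"
    by (simp add: L comp_assoc)
  also have "\<dots> = Rpq R u c \<circ> (MM R [u] Z \<circ> (MM R U [c] \<circ> (MM R U Z \<circ> MM R [c] Z)))"
    by (simp add: IH)
  also have "\<dots> = Rpq R u c \<circ> (MM R U [c] \<circ> (MM R [u] Z \<circ> (MM R U Z \<circ> MM R [c] Z)))"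
    by (simp add: comm_assoc[OF C])
  also have "\<dots> = MM R (u#U) [c] \<circ> (MM R (u#U) Z \<circ> MM R [c] Z)"
    by (simp add: MM_Cons[of R u U] MM_single comp_assoc)
  finally show ?case .
qed

lemma abstract_main:
  assumes "pentagon_map R" "distinct U" "distinct Z" "distinct (V' @ c # W')"
    and "set U \<inter> set (V' @ c # W') = {}" "set U \<inter> set Z = {}" "set Z \<inter> set (V' @ c # W') = {}"
  shows "MM R (c#W') Z \<circ> MM R U (V'@[c]) = MM R U (V'@[c]) \<circ> MM R U Z \<circ> MM R (c#W') Z"
proof -
  have split: "MM R U (V'@[c]) = MM R U V' \<circ> MM R U [c]"
    by (rule MM_append2) (use assms in auto)
  have C1: "MM R W' Z \<circ> MM R U (V'@[c]) = MM R U (V'@[c]) \<circ> MM R W' Z"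
    by (rule MM_comm) (use assms in auto)
  have C2: "MM R [c] Z \<circ> MM R U V' = MM R U V' \<circ> MM R [c] Z"
    by (rule MM_comm) (use assms in auto)
  have Kc: "MM R [c] Z \<circ> MM R U [c] = MM R U [c] \<circ> (MM R U Z \<circ> MM R [c] Z)"
    by (rule K) (use assms in auto)
  have "MM R (c#W') Z \<circ> MM R U (V'@[c]) = MM R [c] Z \<circ> (MM R W' Z \<circ> MM R U (V'@[c]))"
    by (simp add: MM_Cons[of R c W'] comp_assoc)
  also have "\<dots> = MM R [c] Z \<circ> (MM R U V' \<circ> (MM R U [c] \<circ> MM R W' Z))"
    by (subst C1) (simp add: split comp_assoc)
  also have "\<dots> = MM R U V' \<circ> (MM R [c] Z \<circ> (MM R U [c] \<circ> MM R W' Z))"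
    by (simp add: comm_assoc[OF C2])
  also have "\<dots> = MM R U V' \<circ> (MM R U [c] \<circ> (MM R U Z \<circ> (MM R [c] Z \<circ> MM R W' Z)))"
    by (simp add: Kc flip: comp_assoc)
  also have "\<dots> = MM R U (V'@[c]) \<circ> MM R U Z \<circ> MM R (c#W') Z"
    by (simp add: MM_Cons[of R c W'] split comp_assoc)
  finally show ?thesis .
qed

lemma foldr_concat: "foldr (\<circ>) (concat xss) id = foldr (\<circ>) (map (\<lambda>xs. foldr (\<circ>) xs id) xss) id"
proof (induction xss)
  case Nil then show ?case by simp
next
  case (Cons xs xss)
  have "foldr (\<circ>) (concat (xs#xss)) id = foldr (\<circ>) xs id \<circ> foldr (\<circ>) (concat xss) id"
    by (simp only: concat.simps foldr_append) (rule foldr_comp_g)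
  also have "\<dots> = foldr (\<circ>) (map (\<lambda>xs. foldr (\<circ>) xs id) (xs#xss)) id"
    unfolding Cons.IH by (simp only: list.map foldr_Cons comp_apply)
  finally show ?case .
qed

lemma TT_MM:
  assumes "l \<ge> 1"
  shows "TT R n i k l s t = MM R (map (\<lambda>m. brk n s (int i + int (s - 1) * int n + int k + int m - 1)) [0..<l])
     (map (\<lambda>j. brk n t (int i + int (t - 1) * int n + int j - 1)) [1..<k+1])"
  using assms unfolding TT_def tt_def comp_seq_def MM_def
  by (simp add: foldr_concat comp_def)

lemma brk_int:
  assumes "n > 0" "t = Suc t'"
  shows "int (brk n t x) = int t' * int n + (x - 1) mod int n + 1"
proof -
  have a: "0 \<le> (x - 1) mod int n" using assms by auto
  show ?thesis using a assms unfolding brk_def by simp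
qed

lemma brk_range:
  assumes "n > 0" "t \<ge> 1"
  shows "(t - 1) * n < brk n t x \<and> brk n t x \<le> t * n"
proof -
  obtain t' where t: "t = Suc t'" using assms by (cases t) auto
  have a: "0 \<le> (x - 1) mod int n" "(x - 1) mod int n < int n" using assms by auto
  have "int ((t - 1) * n) < int (brk n t x) \<and> int (brk n t x) \<le> int (t * n)"
    using brk_int[OF assms(1) t, of x] a t by (simp add: algebra_simps)
  then show ?thesis by linarith
qed

lemma brk_distinct:
  assumes "n > 0" "b - a \<le> n" "t \<ge> 1"
  shows "distinct (map (\<lambda>j. brk n t (d + int j)) [a..<b])"
proof -
  have "inj_on (\<lambda>j. brk n t (d + int j)) {a..<b}"
  proof
    fix x y assume x: "x \<in> {a..<b}" and y: "y \<in> {a..<b}" and e: "brk n t (d + int x) = brk n t (d + int y)"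
    have p1: "0 \<le> (d + int x - 1) mod int n" "0 \<le> (d + int y - 1) mod int n" using assms by auto
    obtain t' where t: "t = Suc t'" using assms by (cases t) auto
    have "(d + int x - 1) mod int n = (d + int y - 1) mod int n"
      using e brk_int[OF assms(1) t, of "d + int x"] brk_int[OF assms(1) t, of "d + int y"] by simp
    then have "int n dvd (d + int x - 1) - (d + int y - 1)" by (simp add: mod_eq_dvd_iff)
    then have dv: "int n dvd int x - int y" by simp
    show "x = y"
    proof (rule ccontr)
      assume "x \<noteq> y"
      then have "int x - int y \<noteq> 0" by simp
      from dvd_imp_le_int[OF this dv] have "int n \<le> \<bar>int x - int y\<bar>" by simp
      then show False using x y assms by auto
    qed
  qed
  then show ?thesis by (simp add: distinct_map)
qed

theorem mainTheorem11:
  fixes R :: "'a \<times> 'a \<Rightarrow> 'a \<times> 'a" and n i k l :: nat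
  assumes "pentagon_map R"
    and "n > 1"
    and "1 \<le> i" "i \<le> n" and "1 \<le> l" "l \<le> n"
    and "1 \<le> k" "k \<le> n - l + 1"
  shows "TT R n i k l 2 3 \<circ> TT R n i k l 1 2
       = TT R n i k l 1 2 \<circ> TT R n i k l 1 3 \<circ> TT R n i k l 2 3"
proof -
  have n0: "n > 0" using assms by simp
  define g where "g j = brk n 2 (int i + int n - 1 + int j)" for j
  define U where "U = map (\<lambda>m. brk n 1 (int i + int k - 1 + int m)) [0..<l]"
  define V' where "V' = map g [1..<k]"
  define c where "c = g k"
  define W' where "W' = map g [k+1..<k+l]"
  define Z where "Z = map (\<lambda>j. brk n 3 (int i + 2 * int n - 1 + int j)) [1..<k+1]"
  have eV: "map (\<lambda>j. brk n 2 (int i + int (2 - 1) * int n + int j - 1)) [1..<k+1] = V' @ [c]"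
  proof -
    have "[1..<k+1] = [1..<k] @ [k]" using assms by simp
    then show ?thesis unfolding V'_def c_def g_def by (simp add: algebra_simps)
  qed
  have eW: "map (\<lambda>m. brk n 2 (int i + int (2 - 1) * int n + int k + int m - 1)) [0..<l] = c # W'"
  proof -
    have "c # W' = map g [k..<k+l]" unfolding c_def W'_def using assms by (simp add: upt_conv_Cons)
    also have "\<dots> = map (\<lambda>m. brk n 2 (int i + int (2 - 1) * int n + int k + int m - 1)) [0..<l]"
      by (rule nth_equalityI) (auto simp: g_def algebra_simps)
    finally show ?thesis by simp
  qed
  have eU: "map (\<lambda>m. brk n 1 (int i + int (1 - 1) * int n + int k + int m - 1)) [0..<l] = U"
    unfolding U_def by (simp add: algebra_simps)
  have eZ: "map (\<lambda>j. brk n 3 (int i + int (3 - 1) * int n + int j - 1)) [1..<k+1] = Z"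
    unfolding Z_def by (simp add: algebra_simps)
  have h12: "TT R n i k l 1 2 = MM R U (V'@[c])" using TT_MM[of l R n i k 1 2] assms eU eV by simp
  have h13: "TT R n i k l 1 3 = MM R U Z" using TT_MM[of l R n i k 1 3] assms eU eZ by simp
  have h23: "TT R n i k l 2 3 = MM R (c#W') Z" using TT_MM[of l R n i k 2 3] assms eW eZ by simp
  have dU: "distinct U" unfolding U_def using brk_distinct[OF n0, of l 0 1 "int i + int k - 1"] assms by simp
  have dZ: "distinct Z" unfolding Z_def using brk_distinct[OF n0, of "k+1" 1 3 "int i + 2 * int n - 1"] assms by simp
  have eVW: "V' @ c # W' = map g [1..<k+l]"
  proof -
    have "[1..<k+l] = [1..<k] @ k # [k+1..<k+l]" using assms
      by (metis Suc_eq_plus1 le_add1 le_add_same_cancel1 less_add_same_cancel1 less_le_trans upt_add_eq_append upt_conv_Cons zero_less_one)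
    then show ?thesis unfolding V'_def c_def W'_def by simp
  qed
  have dVW: "distinct (V' @ c # W')" unfolding eVW g_def
    using brk_distinct[OF n0, of "k+l" 1 2 "int i + int n - 1"] assms by simp
  have sU: "\<forall>x\<in>set U. x \<le> n" unfolding U_def using brk_range[OF n0, of 1] by auto
  have sVW: "\<forall>x\<in>set (V' @ c # W'). n < x \<and> x \<le> 2 * n" unfolding eVW g_def
    using brk_range[OF n0, of 2] by auto
  have sZ: "\<forall>x\<in>set Z. 2 * n < x" unfolding Z_def using brk_range[OF n0, of 3] by auto
  have "MM R (c#W') Z \<circ> MM R U (V'@[c]) = MM R U (V'@[c]) \<circ> MM R U Z \<circ> MM R (c#W') Z"
    by (rule abstract_main[OF assms(1) dU dZ dVW]) (use sU sVW sZ in fastforce)+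
  then show ?thesis using h12 h13 h23 by simp
qed

end
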